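(* Let $\mathcal{H}$ be a finite-dimensional Hilbert space, let $P, Q$ be orthogonal projectors on $\mathcal{H}$, and define $$f(P,Q) := \min_{\tilde P \in \mathrm{Proj}(\mathcal{H})}\|PQP - \tilde P\|.$$ Then $\|[P,Q]\| = \sqrt{f(P,Q) - f(P,Q)^2}$.
   Context: $\mathrm{Proj}(\mathcal{H})$ is the set of orthogonal projectors on $\mathcal{H}$, $\|\cdot\|$ the operator norm, $[P,Q] = PQ - QP$. *)

theory Defs
  imports "HOL-Analysis.Analysis"
begin

text \<open>The finite-dimensional Hilbert space is modelled as complex^'n (standard inner product,
  Euclidean norm); operators are complex 'n x 'n matrices.\<close>

definition cadjoint :: "complex^'n^'n \<Rightarrow> complex^'n^'n" where
  "cadjoint A = (\<chi> i j. cnj (A $ j $ i))"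

definition orth_proj :: "complex^'n^'n \<Rightarrow> bool" where
  "orth_proj P \<longleftrightarrow> P ** P = P \<and> cadjoint P = P"

definition opnorm :: "complex^'n^'n \<Rightarrow> real" where
  "opnorm A = onorm (\<lambda>x. A *v x)"

definition commutator :: "complex^'n^'n \<Rightarrow> complex^'n^'n \<Rightarrow> complex^'n^'n" where
  "commutator P Q = P ** Q - Q ** P"

definition fdist :: "complex^'n^'n \<Rightarrow> complex^'n^'n \<Rightarrow> real" where
  "fdist P Q = Inf ((\<lambda>R. opnorm (P ** Q ** P - R)) ` {R. orth_proj R})"

end

theory Submission
  imports Defs
begin

definition selfadj :: "('a::real_inner \<Rightarrow> 'a) \<Rightarrow> bool" where
  "selfadj f \<longleftrightarrow> (\<forall>x y. inner (f x) y = inner x (f y))"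

lemma quad_zero:
  fixes c d :: real
  assumes "d \<ge> 0" and "\<And>t. 0 \<le> 2 * t * c + t^2 * d"
  shows "c = 0"
proof -
  define t where "t = -c/(d+1)"
  have e: "d + 1 > 0" using assms(1) by simp
  have te: "t*(d+1) = -c" unfolding t_def using e by simp
  have "(2 * t * c + t^2 * d) * (d+1)^2 = 2*c*(t*(d+1))*(d+1) + (t*(d+1))^2*d"
    by (simp add: power2_eq_square algebra_simps)
  also have "\<dots> = -(c^2*(d+2))" unfolding te by (simp add: power2_eq_square algebra_simps)
  finally have "(2 * t * c + t^2 * d) * (d+1)^2 = -(c^2*(d+2))" .
  moreover have "0 \<le> (2 * t * c + t^2 * d) * (d+1)^2" using assms(2) by simp
  ultimately have "c^2 * (d+2) \<le> 0" by linarith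
  moreover have "d + 2 > 0" using assms(1) by simp
  ultimately have "c^2 \<le> 0" by (simp add: mult_le_0_iff)
  thus ?thesis by simp
qed

lemma eig_exists:
  fixes f :: "'a::euclidean_space \<Rightarrow> 'a"
  assumes lin: "linear f" and sa: "selfadj f" and S: "subspace S" and inv: "f ` S \<subseteq> S"
    and ne: "S \<noteq> {0}"
  obtains v c where "v \<in> S" "norm v = 1" "f v = c *\<^sub>R v"
proof -
  let ?K = "sphere 0 1 \<inter> S"
  have cK: "compact ?K" using closed_subspace[OF S] compact_sphere by (simp add: compact_Int_closed)
  obtain x where x: "x \<in> S" "x \<noteq> 0" using ne S subspace_0 by blast
  have "(1/norm x) *\<^sub>R x \<in> ?K" using x S by (simp add: subspace_scale)
  hence neK: "?K \<noteq> {}" by blast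
  have bl: "bounded_linear f" using lin linear_conv_bounded_linear by blast
  have cont: "continuous_on ?K (\<lambda>y. inner (f y) y)"
    by (intro continuous_intros linear_continuous_on bl)
  obtain v where v: "v \<in> ?K" and mx: "\<And>y. y \<in> ?K \<Longrightarrow> inner (f y) y \<le> inner (f v) v"
    using continuous_attains_sup[OF cK neK cont] by blast
  define M where "M = inner (f v) v"
  have vS: "v \<in> S" and nv: "norm v = 1" using v by auto
  have vv: "inner v v = 1" using nv by (simp add: norm_eq_1)
  have quad: "inner (f y) y \<le> M * inner y y" if yS: "y \<in> S" for y
  proof (cases "y = 0")
    case True then show ?thesis by (simp add: linear_0[OF lin])
  next
    case False
    let ?y = "(1/norm y) *\<^sub>R y"
    have "?y \<in> ?K" using yS S False by (simp add: subspace_scale)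
    hence "inner (f ?y) ?y \<le> M" using mx M_def by blast
    hence "(1/norm y)^2 * inner (f y) y \<le> M" 
      by (simp add: linear_scale[OF lin] power2_eq_square)
    hence "inner (f y) y \<le> M * (norm y)^2" using False
      by (simp add: field_simps)
    thus ?thesis by (simp add: power2_norm_eq_inner)
  qed
  define T where "T y = M *\<^sub>R y - f y" for y
  have Tpos: "0 \<le> inner (T y) y" if "y \<in> S" for y
    using quad[OF that] by (simp add: T_def inner_diff_left)
  have Tv: "inner (T v) v = 0" by (simp add: T_def inner_diff_left M_def vv)
  have Tsym: "inner (T y) z = inner y (T z)" for y z
    using sa by (simp add: T_def inner_diff_left inner_diff_right selfadj_def inner_commute)
  have Tlin: "T (y + t *\<^sub>R z) = T y + t *\<^sub>R T z" for y z t
    by (simp add: T_def linear_add[OF lin] linear_scale[OF lin] algebra_simps)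
  have key: "inner (T v) y = 0" if yS: "y \<in> S" for y
  proof (rule quad_zero)
    show "0 \<le> inner (T y) y" using Tpos[OF yS] .
    fix t :: real
    have "v + t *\<^sub>R y \<in> S" using vS yS S by (simp add: subspace_add subspace_scale)
    hence "0 \<le> inner (T (v + t *\<^sub>R y)) (v + t *\<^sub>R y)" by (rule Tpos)
    also have "\<dots> = inner (T v) v + t * inner (T v) y + t * inner (T y) v + t * t * inner (T y) y"
      by (simp add: Tlin inner_add_left inner_add_right algebra_simps)
    also have "\<dots> = 2 * t * inner (T v) y + t^2 * inner (T y) y"
      using Tv Tsym[of y v] by (simp add: inner_commute power2_eq_square)
    finally show "0 \<le> 2 * t * inner (T v) y + t^2 * inner (T y) y" .
  qed
  have "T v \<in> S" using vS S inv by (auto simp: T_def intro!: subspace_diff subspace_scale)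
  hence "inner (T v) (T v) = 0" by (rule key)
  hence "T v = 0" by simp
  hence "f v = M *\<^sub>R v" by (simp add: T_def)
  thus ?thesis using that vS nv by blast
qed

lemma spectral_sub:
  fixes f :: "'a::euclidean_space \<Rightarrow> 'a"
  assumes lin: "linear f" and sa: "selfadj f"
  shows "subspace S \<Longrightarrow> f ` S \<subseteq> S \<Longrightarrow> \<exists>B. finite B \<and> B \<subseteq> S \<and> pairwise orthogonal B \<and>
     (\<forall>b\<in>B. norm b = 1 \<and> f b = (inner (f b) b) *\<^sub>R b) \<and> span B = S"
proof (induction "dim S" arbitrary: S rule: less_induct)
  case less
  show ?case
  proof (cases "S = {0}")
    case True
    then show ?thesis by (intro exI[of _ "{}"]) auto
  next
    case False
    obtain v c where v: "v \<in> S" "norm v = 1" "f v = c *\<^sub>R v"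
      using eig_exists[OF lin sa less.prems False] by blast
    have vv: "inner v v = 1" using v(2) by (simp add: norm_eq_1)
    define S' where "S' = S \<inter> {y. orthogonal v y}"
    have sS': "subspace S'" unfolding S'_def
      using less.prems(1) subspace_orthogonal_to_vector[of v] by (metis subspace_inter)
    have iS': "f ` S' \<subseteq> S'"
    proof
      fix z assume "z \<in> f ` S'"
      then obtain y where y: "y \<in> S'" "z = f y" by blast
      have "inner v (f y) = inner (f v) y" using sa by (simp add: selfadj_def)
      also have "\<dots> = 0" using y v by (simp add: S'_def orthogonal_def)
      finally show "z \<in> S'" using y less.prems(2) by (auto simp: S'_def orthogonal_def)
    qed
    have "v \<notin> S'" using vv by (simp add: S'_def orthogonal_def)
    hence "S' \<subset> S" using v(1) S'_def by blast
    hence "span S' \<subset> span S" using sS' less.prems(1) by (metis span_eq_iff)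
    hence "dim S' < dim S" by (rule dim_psubset)
    then obtain B' where B': "finite B'" "B' \<subseteq> S'" "pairwise orthogonal B'"
      "\<forall>b\<in>B'. norm b = 1 \<and> f b = (inner (f b) b) *\<^sub>R b" "span B' = S'"
      using less.hyps[OF _ sS' iS'] by blast
    define B where "B = insert v B'"
    have "finite B" using B' by (simp add: B_def)
    moreover have "B \<subseteq> S" using B' v by (auto simp: B_def S'_def)
    moreover have "pairwise orthogonal B"
      using B' unfolding B_def pairwise_insert
      by (auto simp: S'_def orthogonal_commute)
    moreover have "\<forall>b\<in>B. norm b = 1 \<and> f b = (inner (f b) b) *\<^sub>R b"
      using B' v vv by (auto simp: B_def)
    moreover have "span B = S"
    proof
      show "span B \<subseteq> S" using \<open>B \<subseteq> S\<close> less.prems(1) by (simp add: span_minimal)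
      show "S \<subseteq> span B"
      proof
        fix y assume y: "y \<in> S"
        have "y - (inner y v) *\<^sub>R v \<in> S'"
          using y v vv less.prems(1)
          by (auto simp: S'_def orthogonal_def inner_diff_right inner_commute intro!: subspace_diff subspace_scale)
        hence "y - (inner y v) *\<^sub>R v \<in> span B"
          using B'(5) span_mono[of B' B] by (auto simp: B_def)
        moreover have "(inner y v) *\<^sub>R v \<in> span B" by (simp add: B_def span_base span_scale)
        ultimately have "(y - (inner y v) *\<^sub>R v) + (inner y v) *\<^sub>R v \<in> span B" by (rule span_add)
        thus "y \<in> span B" by simp
      qed
    qed
    ultimately show ?thesis by blast
  qed
qed

definition eigbasis :: "('a::euclidean_space \<Rightarrow> 'a) \<Rightarrow> 'a set \<Rightarrow> bool" where
  "eigbasis f B \<longleftrightarrow> finite B \<and> pairwise orthogonal B \<and> (\<forall>b\<in>B. norm b = 1) \<and> span B = UNIV \<and>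
     (\<forall>b\<in>B. f b = (inner (f b) b) *\<^sub>R b)"

lemma eigbasis_exists:
  fixes f :: "'a::euclidean_space \<Rightarrow> 'a"
  assumes lin: "linear f" and sa: "selfadj f"
  obtains B where "eigbasis f B"
proof -
  have "\<exists>B. finite B \<and> B \<subseteq> UNIV \<and> pairwise orthogonal B \<and>
     (\<forall>b\<in>B. norm b = 1 \<and> f b = (inner (f b) b) *\<^sub>R b) \<and> span B = UNIV"
    by (rule spectral_sub[OF lin sa subspace_UNIV]) simp
  then show ?thesis using that unfolding eigbasis_def by metis
qed

lemma eigbasis_inner:
  assumes "eigbasis f B" "b \<in> B" "c \<in> B"
  shows "inner b c = (if b = c then 1 else 0)"
proof (cases "b = c")
  case True
  then show ?thesis using assms unfolding eigbasis_def by (simp add: norm_eq_1)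
next
  case False
  then show ?thesis using assms unfolding eigbasis_def pairwise_def orthogonal_def by simp
qed

lemma eigbasis_expand:
  assumes "eigbasis f B"
  shows "(\<Sum>b\<in>B. inner x b *\<^sub>R b) = x"
  using assms unfolding eigbasis_def by (intro orthonormal_basis_expand) auto

lemma eigbasis_inner_expand:
  assumes "eigbasis f B"
  shows "inner x y = (\<Sum>b\<in>B. inner x b * inner y b)"
proof -
  have "inner x y = inner (\<Sum>b\<in>B. inner x b *\<^sub>R b) y" using eigbasis_expand[OF assms] by simp
  also have "\<dots> = (\<Sum>b\<in>B. inner x b * inner b y)"
    by (simp add: inner_sum_left)
  also have "\<dots> = (\<Sum>b\<in>B. inner x b * inner y b)"
    by (simp add: inner_commute[of y])
  finally show ?thesis .
qed

lemma diag_norm: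
  assumes B: "eigbasis f B" and sa: "selfadj D"
    and Db: "\<And>b. b \<in> B \<Longrightarrow> D b = d b *\<^sub>R b" and M: "\<And>b. b \<in> B \<Longrightarrow> \<bar>d b\<bar> \<le> M" and M0: "0 \<le> M"
  shows "norm (D x) \<le> M * norm x"
proof -
  have ib: "inner (D x) b = d b * inner x b" if "b \<in> B" for b
    using sa Db[OF that] by (simp add: selfadj_def)
  have sq: "(\<Sum>b\<in>B. (inner x b)^2) = (norm x)^2"
  proof -
    have "(norm x)^2 = inner x x" by (rule power2_norm_eq_inner)
    also have "\<dots> = (\<Sum>b\<in>B. inner x b * inner x b)" by (rule eigbasis_inner_expand[OF B])
    finally show ?thesis by (simp add: power2_eq_square)
  qed
  have "(norm (D x))^2 = (\<Sum>b\<in>B. inner (D x) b * inner (D x) b)"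
    using eigbasis_inner_expand[OF B, of "D x" "D x"] by (simp only: power2_norm_eq_inner)
  also have "\<dots> = (\<Sum>b\<in>B. (d b)^2 * (inner x b)^2)"
    by (rule sum.cong[OF refl]) (simp add: ib power2_eq_square)
  also have "\<dots> \<le> (\<Sum>b\<in>B. M^2 * (inner x b)^2)"
  proof (intro sum_mono mult_right_mono)
    fix b assume "b \<in> B"
    thus "(d b)^2 \<le> M^2" using power_mono[OF M[of b] abs_ge_zero, of 2] by simp
  qed simp
  also have "\<dots> = M^2 * (\<Sum>b\<in>B. (inner x b)^2)"
    by (simp add: sum_distrib_left)
  also have "\<dots> = M^2 * (norm x)^2" using sq by simp
  also have "\<dots> = (M * norm x)^2" by (simp add: power_mult_distrib)
  finally have "(norm (D x))^2 \<le> (M * norm x)^2" .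
  thus ?thesis by (rule power2_le_imp_le) (simp add: M0)
qed

lemma diag_form:
  assumes B: "eigbasis f B" and sa: "selfadj D"
    and Db: "\<And>b. b \<in> B \<Longrightarrow> D b = d b *\<^sub>R b" and M: "\<And>b. b \<in> B \<Longrightarrow> d b \<le> M"
  shows "inner (D x) x \<le> M * inner x x"
proof -
  have ib: "inner (D x) b = d b * inner x b" if "b \<in> B" for b
    using sa Db[OF that] by (simp add: selfadj_def)
  have "inner (D x) x = (\<Sum>b\<in>B. inner (D x) b * inner x b)"
    using eigbasis_inner_expand[OF B, of "D x" x] by (simp only: inner_commute)
  also have "\<dots> = (\<Sum>b\<in>B. d b * (inner x b)^2)"
    by (rule sum.cong[OF refl]) (simp add: ib power2_eq_square)
  also have "\<dots> \<le> (\<Sum>b\<in>B. M * (inner x b)^2)"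
    by (intro sum_mono mult_right_mono M) simp_all
  also have "\<dots> = M * inner x x"
    using eigbasis_inner_expand[OF B, of x x]
    by (simp only: sum_distrib_left power2_eq_square)
  finally show ?thesis .
qed

lemma proj_sq:
  assumes "selfadj q" "\<And>x. q (q x) = q x"
  shows "inner (q z) z = inner (q z) (q z)"
  using assms by (metis selfadj_def)

lemma proj_norm_le:
  assumes "selfadj q" "\<And>x. q (q x) = q x"
  shows "norm (q z) \<le> norm z"
proof -
  have "(norm (q z))^2 = inner (q z) z" using proj_sq[OF assms] by (simp add: power2_norm_eq_inner)
  also have "\<dots> \<le> norm (q z) * norm z" by (rule norm_cauchy_schwarz)
  finally have "norm (q z) * norm (q z) \<le> norm (q z) * norm z" by (simp add: power2_eq_square)
  thus ?thesis by (cases "norm (q z) = 0") auto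
qed

lemma proj_inner_range:
  assumes "selfadj q" "\<And>x. q (q x) = q x"
  shows "inner (q z) (q z) \<ge> 0" "inner (q z) z \<le> inner z z"
proof -
  show "inner (q z) (q z) \<ge> 0" by simp
  have "inner (q z) z = (norm (q z))^2" using proj_sq[OF assms] by (simp add: power2_norm_eq_inner)
  also have "\<dots> \<le> (norm z)^2" using proj_norm_le[OF assms] by (simp add: power_mono)
  finally show "inner (q z) z \<le> inner z z" by (simp add: power2_norm_eq_inner)
qed

lemma pyth:
  fixes u v :: "'a::real_inner"
  assumes "inner u v = 0"
  shows "(norm (u - v))^2 = (norm u)^2 + (norm v)^2" "(norm (u + v))^2 = (norm u)^2 + (norm v)^2"
  using assms by (simp_all add: power2_norm_eq_inner inner_diff_left inner_diff_right inner_add_left inner_add_right inner_commute)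

lemma real_aux1:
  fixes g m :: real
  assumes "0 \<le> g" "g \<le> m" "m \<le> 1/2"
  shows "g - g^2 \<le> m - m^2"
proof -
  have "(m - m^2) - (g - g^2) = (m - g) * (1 - m - g)" by (simp add: algebra_simps power2_eq_square)
  also have "\<dots> \<ge> 0" using assms by (intro mult_nonneg_nonneg) auto
  finally show ?thesis by simp
qed

lemma real_aux2:
  fixes l r :: real
  assumes "0 \<le> l" "l \<le> 1" "0 \<le> r" "r \<le> 1"
  shows "(min l (1 - l))^2 \<le> l^2 - 2 * l * r + r"
proof (cases "l \<le> 1/2")
  case True
  then have "0 \<le> (1 - 2*l) * r" using assms by simp
  then show ?thesis using True by (simp add: min_def algebra_simps)
next
  case False
  then have "0 \<le> (2*l - 1) * (1 - r)" using assms by simp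
  then show ?thesis using False by (simp add: min_def algebra_simps power2_eq_square)
qed

lemma main_abs:
  fixes p q :: "'a::euclidean_space \<Rightarrow> 'a"
  assumes lp: "linear p" and lq: "linear q" and sp: "selfadj p" and sq: "selfadj q"
    and pp: "\<And>x. p (p x) = p x" and qq: "\<And>x. q (q x) = q x"
  obtains m R0 where
   "onorm (\<lambda>x. p (q x) - q (p x)) = sqrt (m - m^2)"
   "\<And>R. linear R \<Longrightarrow> selfadj R \<Longrightarrow> (\<forall>x. R (R x) = R x) \<Longrightarrow> m \<le> onorm (\<lambda>x. p (q (p x)) - R x)"
   "onorm (\<lambda>x. p (q (p x)) - R0 x) \<le> m"
   "linear R0" "selfadj R0" "\<forall>x. R0 (R0 x) = R0 x"
   "\<And>J. linear J \<Longrightarrow> (\<forall>x. p (q (p (J x))) = J (p (q (p x)))) \<Longrightarrow> \<forall>x. R0 (J x) = J (R0 x)"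
proof -
  define a where "a x = p (q (p x))" for x
  have "a = p \<circ> (q \<circ> p)" by (simp add: a_def fun_eq_iff)
  hence la: "linear a" using linear_compose[OF linear_compose[OF lp lq] lp] by simp
  have sa: "selfadj a" using sp sq unfolding selfadj_def a_def by metis
  obtain B where B: "eigbasis a B" using eigbasis_exists[OF la sa] by blast
  have fB: "finite B" using B by (simp add: eigbasis_def)
  define lam where "lam b = inner (a b) b" for b
  have ab: "a b = lam b *\<^sub>R b" if "b \<in> B" for b using B that by (simp add: eigbasis_def lam_def)
  have bb: "inner b b = 1" if "b \<in> B" for b using B that by (simp add: eigbasis_def norm_eq_1)
  have lam_rng: "0 \<le> lam b \<and> lam b \<le> 1" if "b \<in> B" for b
  proof -
    have "lam b = inner (q (p b)) (p b)" using sp by (simp add: lam_def a_def selfadj_def)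
    also have "\<dots> = inner (q (p b)) (q (p b))" using proj_sq[OF sq qq] by simp
    finally have l1: "lam b = inner (q (p b)) (q (p b))" .
    have "lam b = inner (q (p b)) (p b)" using sp by (simp add: lam_def a_def selfadj_def)
    also have "\<dots> \<le> inner (p b) (p b)" using proj_inner_range(2)[OF sq qq] by simp
    also have "\<dots> = inner (p b) b" using proj_sq[OF sp pp] by simp
    also have "\<dots> \<le> inner b b" using proj_inner_range(2)[OF sp pp] by simp
    finally show ?thesis using l1 bb[OF that] by simp
  qed
  have Bne: "B \<noteq> {}"
  proof
    assume "B = {}"
    then have "span B = {0}" by simp
    moreover have "span B = UNIV" using B by (simp add: eigbasis_def)
    moreover obtain e where e: "e \<in> (Basis::'a set)" using nonempty_Basis by blast
    ultimately show False using nonzero_Basis[OF e] by auto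
  qed
  define g where "g b = min (lam b) (1 - lam b)" for b
  define m where "m = Max (g ` B)"
  have "m \<in> g ` B" unfolding m_def using fB Bne by (intro Max_in) auto
  then obtain b1 where b1: "b1 \<in> B" "g b1 = m" by auto
  have gm: "g b \<le> m" if "b \<in> B" for b using that fB by (simp add: m_def)
  have g_rng: "0 \<le> g b \<and> g b \<le> 1/2" if "b \<in> B" for b using lam_rng[OF that] by (simp add: g_def min_def)
  have m_rng: "0 \<le> m" "m \<le> 1/2" using g_rng[OF b1(1)] b1(2) by auto
  define s where "s = m - m^2"
  have "s = m * (1 - m)" by (simp add: s_def power2_eq_square algebra_simps)
  hence s0: "0 \<le> s" using m_rng by simp
  have lam_s: "lam b - (lam b)^2 \<le> s" if "b \<in> B" for b
  proof -
    have "lam b - (lam b)^2 = g b - (g b)^2" by (simp add: g_def min_def algebra_simps power2_eq_square)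
    also have "\<dots> \<le> s" unfolding s_def using g_rng[OF that] gm[OF that] m_rng by (intro real_aux1) auto
    finally show ?thesis .
  qed
  have lam_s1: "lam b1 - (lam b1)^2 = s"
  proof (cases "lam b1 \<le> 1 - lam b1")
    case True
    then have "m = lam b1" using b1 by (simp add: g_def)
    then show ?thesis by (simp add: s_def)
  next
    case False
    then have mm: "m = 1 - lam b1" using b1 by (simp add: g_def)
    show ?thesis unfolding s_def mm by (simp add: power2_eq_square algebra_simps)
  qed
  have blp: "bounded_linear p" and blq: "bounded_linear q" using lp lq linear_conv_bounded_linear by auto
  have bla: "bounded_linear a" using la linear_conv_bounded_linear by auto
  have sap: "inner (p x) y = inner x (p y)" for x y using sp by (simp add: selfadj_def)
  have saq: "inner (q x) y = inner x (q y)" for x y using sq by (simp add: selfadj_def)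
  have saa: "inner (a x) y = inner x (a y)" for x y using sa by (simp add: selfadj_def)
  define K where "K y = q (p y) - p (q (p y))" for y
  define Bf where "Bf y = a y - a (a y)" for y
  have saBf: "selfadj Bf" unfolding selfadj_def Bf_def
    by (simp add: inner_diff_left inner_diff_right saa)
  have Bfb: "Bf b = (lam b - (lam b)^2) *\<^sub>R b" if "b \<in> B" for b
    using ab[OF that] by (simp add: Bf_def linear_scale[OF la] power2_eq_square algebra_simps)
  have Kq: "inner (K y) (K y) = inner (Bf y) y" for y
  proof -
    define z where "z = q (p y)"
    have "inner (K y) (K y) = inner (z - p z) (z - p z)" by (simp add: K_def z_def)
    also have "\<dots> = inner z z - inner (p z) (p z)"
      using proj_sq[OF sp pp, of z] by (simp add: inner_diff_left inner_diff_right inner_commute)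
    also have "inner z z = inner (a y) y"
      using proj_sq[OF sq qq, of "p y"] by (simp add: z_def a_def sap)
    also have "inner (p z) (p z) = inner (a (a y)) y" by (simp add: z_def a_def[symmetric] saa)
    finally show ?thesis by (simp add: Bf_def inner_diff_left)
  qed
  have Knorm: "norm (K y) \<le> sqrt s * norm y" for y
  proof -
    have "(norm (K y))^2 = inner (Bf y) y" using Kq by (simp add: power2_norm_eq_inner)
    also have "\<dots> \<le> s * inner y y" by (rule diag_form[OF B saBf Bfb lam_s])
    also have "\<dots> = (sqrt s * norm y)^2" using s0 by (simp add: power_mult_distrib power2_norm_eq_inner)
    finally show ?thesis by (rule power2_le_imp_le) (simp add: s0)
  qed
  have Kb1: "norm (K b1) = sqrt s"
  proof -
    have "(norm (K b1))^2 = inner (Bf b1) b1" using Kq by (simp add: power2_norm_eq_inner)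
    also have "\<dots> = s" using Bfb[OF b1(1)] lam_s1 bb[OF b1(1)] by simp
    finally show ?thesis by (simp add: real_sqrt_unique)
  qed
  have Kp: "K (p y) = K y" for y by (simp add: K_def pp)
  define C where "C x = p (q x) - q (p x)" for x
  have Cdec: "C x = p (q (x - p x)) - K (p x)" for x
    by (simp add: C_def K_def pp linear_diff[OF lq] linear_diff[OF lp])
  have orthK: "inner (p v) (K u) = 0" for u v
    by (simp add: K_def inner_diff_right sap pp)
  have PQw: "norm (p (q (x - p x))) \<le> sqrt s * norm (x - p x)" for x
  proof -
    define w where "w = x - p x"
    define v where "v = p (q w)"
    have pw: "p w = 0" by (simp add: w_def linear_diff[OF lp] pp)
    have "inner v v = inner w (q (p v))" by (simp add: v_def sap saq)
    also have "\<dots> = inner w (K v)"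
    proof -
      have "inner w (p (q (p v))) = 0" by (simp add: sap[symmetric] pw)
      thus ?thesis by (simp add: K_def inner_diff_right)
    qed
    also have "\<dots> \<le> norm w * norm (K v)" by (rule norm_cauchy_schwarz)
    also have "\<dots> \<le> norm w * (sqrt s * norm v)" by (rule mult_left_mono[OF Knorm]) simp
    finally have "norm v * norm v \<le> norm v * (sqrt s * norm w)"
      by (simp add: power2_norm_eq_inner[symmetric] power2_eq_square algebra_simps)
    hence "norm v \<le> sqrt s * norm w" by (cases "norm v = 0") (auto simp: s0)
    thus ?thesis by (simp add: v_def w_def)
  qed
  have Cle: "norm (C x) \<le> sqrt s * norm x" for x
  proof -
    have "(norm (C x))^2 = (norm (p (q (x - p x))))^2 + (norm (K (p x)))^2"
      unfolding Cdec by (rule pyth(1)[OF orthK])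
    also have "\<dots> \<le> (sqrt s * norm (x - p x))^2 + (sqrt s * norm (p x))^2"
      by (intro add_mono power_mono PQw Knorm) simp_all
    also have "\<dots> = s * ((norm (x - p x))^2 + (norm (p x))^2)"
      using s0 by (simp add: power_mult_distrib algebra_simps)
    also have "(norm (x - p x))^2 + (norm (p x))^2 = (norm x)^2"
    proof -
      have "inner (x - p x) (p x) = 0" by (simp add: inner_diff_left sap pp)
      from pyth(2)[OF this] show ?thesis by simp
    qed
    also have "s * (norm x)^2 = (sqrt s * norm x)^2" using s0 by (simp add: power_mult_distrib)
    finally show ?thesis by (rule power2_le_imp_le) (simp add: s0)
  qed
  have blC: "bounded_linear C" unfolding C_def
    by (intro bounded_linear_sub bounded_linear_compose[OF blp blq] bounded_linear_compose[OF blq blp])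
  have onC: "onorm C = sqrt (m - m^2)"
  proof (rule antisym)
    show "onorm C \<le> sqrt (m - m^2)" unfolding s_def[symmetric] by (rule onorm_le[OF Cle])
    have "(norm (K (p b1)))^2 \<le> (norm (C b1))^2"
      unfolding Cdec pyth(1)[OF orthK] by simp
    hence "norm (K b1) \<le> norm (C b1)" unfolding Kp by (rule power2_le_imp_le) simp
    also have "\<dots> \<le> onorm C * norm b1" by (rule onorm[OF blC])
    also have "norm b1 = 1" using bb[OF b1(1)] by (simp add: norm_eq_1)
    finally show "sqrt (m - m^2) \<le> onorm C" using Kb1 s_def by simp
  qed
  have low: "m \<le> onorm (\<lambda>x. a x - R x)"
    if lR: "linear R" and sR: "selfadj R" and RR: "\<forall>x. R (R x) = R x" for R
  proof -
    have RR': "R (R x) = R x" for x using RR by simp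
    define l where "l = lam b1"
    define r where "r = inner (R b1) b1"
    have rr: "inner (R b1) (R b1) = r" using proj_sq[OF sR RR'] r_def by simp
    have r0: "0 \<le> r" using rr[symmetric] by simp
    have r1: "r \<le> 1" using proj_inner_range(2)[OF sR RR', of b1] bb[OF b1(1)] r_def by simp
    have "(norm (a b1 - R b1))^2 = inner (l *\<^sub>R b1 - R b1) (l *\<^sub>R b1 - R b1)"
      using ab[OF b1(1)] by (simp add: power2_norm_eq_inner l_def)
    also have "\<dots> = l^2 - 2 * l * r + r"
      using bb[OF b1(1)] rr r_def
      by (simp add: inner_diff_left inner_diff_right inner_commute power2_eq_square)
    finally have eq: "(norm (a b1 - R b1))^2 = l^2 - 2 * l * r + r" .
    have "m^2 \<le> (norm (a b1 - R b1))^2"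
      unfolding eq b1(2)[symmetric] g_def l_def
      using lam_rng[OF b1(1)] r0 r1 by (intro real_aux2) auto
    hence "m \<le> norm (a b1 - R b1)" by (rule power2_le_imp_le) simp
    also have "\<dots> \<le> onorm (\<lambda>x. a x - R x) * norm b1"
      using onorm[of "\<lambda>x. a x - R x" b1] bounded_linear_sub[OF bla] lR linear_conv_bounded_linear
      by auto
    also have "norm b1 = 1" using bb[OF b1(1)] by (simp add: norm_eq_1)
    finally show ?thesis by simp
  qed
  define B1 where "B1 = {b\<in>B. 1/2 \<le> lam b}"
  define R0 where "R0 x = (\<Sum>b\<in>B1. inner x b *\<^sub>R b)" for x
  have fB1: "finite B1" and B1B: "B1 \<subseteq> B" using fB by (auto simp: B1_def)
  have lR0: "linear R0"
    unfolding linear_iff R0_def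
    by (simp add: inner_add_left scaleR_add_left sum.distrib scaleR_sum_right)
  have saR0: "selfadj R0" unfolding selfadj_def R0_def
    by (simp add: inner_sum_left inner_sum_right inner_commute mult.commute)
  have R0b: "R0 c = (if c \<in> B1 then c else 0)" if "c \<in> B" for c
  proof -
    have "R0 c = (\<Sum>b\<in>B1. (if c = b then b else 0))"
      unfolding R0_def using B1B that
      by (intro sum.cong refl) (auto simp: eigbasis_inner[OF B])
    also have "\<dots> = (if c \<in> B1 then c else 0)" using fB1 by simp
    finally show ?thesis .
  qed
  have R0R0: "\<forall>x. R0 (R0 x) = R0 x"
  proof
    fix x
    have "inner (R0 x) b = inner x b" if "b \<in> B1" for b
      using saR0 R0b[of b] that B1B by (auto simp: selfadj_def)
    thus "R0 (R0 x) = R0 x" unfolding R0_def[of "R0 x"] by (simp add: R0_def[symmetric])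
  qed
  have up: "onorm (\<lambda>x. a x - R0 x) \<le> m"
  proof (rule onorm_le)
    fix x
    show "norm (a x - R0 x) \<le> m * norm x"
    proof (rule diag_norm[OF B, where d = "\<lambda>b. lam b - (if b \<in> B1 then 1 else 0)"])
      show "selfadj (\<lambda>x. a x - R0 x)" using saa saR0
        by (simp add: selfadj_def inner_diff_left inner_diff_right)
      show "a b - R0 b = (lam b - (if b \<in> B1 then 1 else 0)) *\<^sub>R b" if "b \<in> B" for b
        using ab[OF that] R0b[OF that] by (simp add: algebra_simps)
      show "\<bar>lam b - (if b \<in> B1 then 1 else 0)\<bar> \<le> m" if "b \<in> B" for b
        using gm[OF that] lam_rng[OF that] that by (auto simp: B1_def g_def min_def split: if_split_asm)
      show "0 \<le> m" by (rule m_rng)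
    qed
  qed
  have eig: "R0 v = (if 1/2 \<le> \<mu> then v else 0)" if av: "a v = \<mu> *\<^sub>R v" for v \<mu>
  proof -
    have orth: "inner v b = 0" if "b \<in> B" "lam b \<noteq> \<mu>" for b
    proof -
      have "\<mu> * inner v b = inner (a v) b" using av by simp
      also have "\<dots> = inner v (a b)" by (rule saa)
      also have "\<dots> = lam b * inner v b" using ab[OF that(1)] by simp
      finally show ?thesis using that(2) by simp
    qed
    show ?thesis
    proof (cases "1/2 \<le> \<mu>")
      case True
      have "R0 v = (\<Sum>b\<in>B. inner v b *\<^sub>R b)" unfolding R0_def
        using fB B1B orth True by (intro sum.mono_neutral_left) (auto simp: B1_def)
      also have "\<dots> = v" by (rule eigbasis_expand[OF B])
      finally show ?thesis using True by simp
    next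
      case False
      have "R0 v = 0" unfolding R0_def
        using orth False by (intro sum.neutral) (auto simp: B1_def)
      thus ?thesis using False by simp
    qed
  qed
  have comm: "\<forall>x. R0 (J x) = J (R0 x)" if lJ: "linear J" and aJ: "\<forall>x. p (q (p (J x))) = J (p (q (p x)))" for J
  proof
    fix x
    have Jb: "R0 (J b) = (if b \<in> B1 then J b else 0)" if "b \<in> B" for b
    proof -
      have "a (J b) = lam b *\<^sub>R J b" using aJ ab[OF that] by (simp add: a_def[symmetric] linear_scale[OF lJ])
      from eig[OF this] show ?thesis using that by (simp add: B1_def)
    qed
    have "R0 (J x) = R0 (J (\<Sum>b\<in>B. inner x b *\<^sub>R b))" using eigbasis_expand[OF B, of x] by simp
    also have "\<dots> = (\<Sum>b\<in>B. inner x b *\<^sub>R R0 (J b))"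
      by (simp add: linear_sum[OF lJ] linear_scale[OF lJ] linear_sum[OF lR0] linear_scale[OF lR0])
    also have "\<dots> = (\<Sum>b\<in>B. if b \<in> B1 then inner x b *\<^sub>R J b else 0)"
      by (intro sum.cong refl) (simp add: Jb)
    also have "\<dots> = (\<Sum>b\<in>B1. inner x b *\<^sub>R J b)"
      using fB B1B by (simp add: sum.inter_filter B1_def)
    also have "\<dots> = J (R0 x)"
      by (simp add: R0_def linear_sum[OF lJ] linear_scale[OF lJ])
    finally show "R0 (J x) = J (R0 x)" .
  qed
  show ?thesis
    using that[of m R0] onC low up lR0 saR0 R0R0 comm unfolding C_def a_def by blast
qed

lemma inner_cvec: "inner (x::complex^'n) y = Re (\<Sum>i\<in>UNIV. x$i * cnj (y$i))"
  by (simp add: inner_vec_def inner_complex_def)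

lemma cadj_inner:
  fixes A :: "complex^'n^'n"
  shows "inner (A *v x) y = inner x (cadjoint A *v y)"
proof -
  have "(\<Sum>i\<in>UNIV. (\<Sum>j\<in>UNIV. A$i$j * x$j) * cnj (y$i)) =
        (\<Sum>j\<in>UNIV. x$j * cnj (\<Sum>i\<in>UNIV. cnj (A$i$j) * y$i))"
  proof -
    have "(\<Sum>i\<in>UNIV. (\<Sum>j\<in>UNIV. A$i$j * x$j) * cnj (y$i)) = (\<Sum>i\<in>UNIV. \<Sum>j\<in>UNIV. A$i$j * x$j * cnj (y$i))"
      by (simp add: sum_distrib_right)
    also have "\<dots> = (\<Sum>j\<in>UNIV. \<Sum>i\<in>UNIV. A$i$j * x$j * cnj (y$i))" by (rule sum.swap)
    also have "\<dots> = (\<Sum>j\<in>UNIV. x$j * cnj (\<Sum>i\<in>UNIV. cnj (A$i$j) * y$i))"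
      by (simp add: sum_distrib_left mult_ac)
    finally show ?thesis .
  qed
  thus ?thesis unfolding inner_cvec matrix_vector_mult_def cadjoint_def by simp
qed

lemma cmat_scale: "(A::complex^'n^'m) *v (c *s x) = c *s (A *v x)"
  by (simp add: matrix_vector_mult_def vec_eq_iff sum_distrib_left mult_ac)

lemma csplit: "c *s (x::complex^'n) = Re c *\<^sub>R x + Im c *\<^sub>R (\<i> *s x)"
  by (simp add: vec_eq_iff complex_eq_iff algebra_simps)

lemma linear_J: "linear (\<lambda>x::complex^'n. \<i> *s x)"
  by (simp add: linear_iff vec_eq_iff scaleR_conv_of_real algebra_simps)

lemma mat_proj_props:
  fixes P :: "complex^'n^'n"
  assumes "orth_proj P"
  shows "linear ((*v) P)" "selfadj ((*v) P)" "\<And>x. P *v (P *v x) = P *v x"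
proof -
  show "linear ((*v) P)" by simp
  show "selfadj ((*v) P)" using assms unfolding selfadj_def orth_proj_def
    using cadj_inner[of P] by simp
  show "\<And>x. P *v (P *v x) = P *v x" using assms unfolding orth_proj_def
    by (simp add: matrix_vector_mul_assoc)
qed

theorem lemma7:
  fixes P Q :: "complex^'n^'n"
  assumes "orth_proj P" and "orth_proj Q"
  shows "opnorm (commutator P Q) = sqrt (fdist P Q - (fdist P Q)^2)"
proof -
  note pP = mat_proj_props[OF assms(1)] and pQ = mat_proj_props[OF assms(2)]
  obtain m R0 where
   onC: "onorm (\<lambda>x. P *v (Q *v x) - Q *v (P *v x)) = sqrt (m - m^2)"
   and low: "\<And>R. linear R \<Longrightarrow> selfadj R \<Longrightarrow> (\<forall>x. R (R x) = R x) \<Longrightarrow>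
        m \<le> onorm (\<lambda>x. P *v (Q *v (P *v x)) - R x)"
   and up: "onorm (\<lambda>x. P *v (Q *v (P *v x)) - R0 x) \<le> m"
   and lR0: "linear R0" and sR0: "selfadj R0" and iR0: "\<forall>x. R0 (R0 x) = R0 x"
   and comm: "\<And>J. linear J \<Longrightarrow> (\<forall>x. P *v (Q *v (P *v (J x))) = J (P *v (Q *v (P *v x)))) \<Longrightarrow>
        \<forall>x. R0 (J x) = J (R0 x)"
  proof (rule main_abs[OF pP(1) pQ(1) pP(2) pQ(2) pP(3) pQ(3)])
    fix m R0
    assume a1: "onorm (\<lambda>x. P *v (Q *v x) - Q *v (P *v x)) = sqrt (m - m^2)"
    assume a2: "\<And>R. linear R \<Longrightarrow> selfadj R \<Longrightarrow> (\<forall>x. R (R x) = R x) \<Longrightarrow>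
        m \<le> onorm (\<lambda>x. P *v (Q *v (P *v x)) - R x)"
    assume a3: "onorm (\<lambda>x. P *v (Q *v (P *v x)) - R0 x) \<le> m"
    assume a4: "linear R0" "selfadj R0" "\<forall>x. R0 (R0 x) = R0 x"
    assume a5: "\<And>J. linear J \<Longrightarrow> (\<forall>x. P *v (Q *v (P *v (J x))) = J (P *v (Q *v (P *v x)))) \<Longrightarrow>
        \<forall>x. R0 (J x) = J (R0 x)"
    show thesis using that[OF a1 a2 a3 a4 a5] .
  qed
  have cJ: "R0 (\<i> *s x) = \<i> *s R0 x" for x
    using comm[OF linear_J] by (simp add: cmat_scale)
  have cR0: "R0 (c *s x) = c *s R0 x" for c x
  proof -
    have "R0 (c *s x) = Re c *\<^sub>R R0 x + Im c *\<^sub>R R0 (\<i> *s x)"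
      by (simp add: csplit[of c x] linear_add[OF lR0] linear_scale[OF lR0])
    also have "\<dots> = c *s R0 x" by (simp add: cJ csplit[of c "R0 x"])
    finally show ?thesis .
  qed
  have vlin: "Vector_Spaces.linear (*s) (*s) R0"
    by unfold_locales (simp_all add: linear_add[OF lR0] cR0)
  define Rm where "Rm = matrix R0"
  have Rm: "Rm *v x = R0 x" for x unfolding Rm_def by (rule matrix_works[OF vlin])
  have oRm: "orth_proj Rm"
    unfolding orth_proj_def
  proof
    show "Rm ** Rm = Rm"
      by (simp add: matrix_eq matrix_vector_mul_assoc[symmetric] Rm iR0)
    show "cadjoint Rm = Rm"
    proof (subst matrix_eq, intro allI)
      fix y
      have "inner x (cadjoint Rm *v y - Rm *v y) = 0" for x
        using cadj_inner[of Rm x y] sR0 by (simp add: inner_diff_right Rm selfadj_def)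
      from this[of "cadjoint Rm *v y - Rm *v y"] show "cadjoint Rm *v y = Rm *v y" by simp
    qed
  qed
  have opn: "opnorm (P ** Q ** P - R) = onorm (\<lambda>x. P *v (Q *v (P *v x)) - R *v x)" for R
  proof -
    have "(\<lambda>x. (P ** Q ** P - R) *v x) = (\<lambda>x. P *v (Q *v (P *v x)) - R *v x)"
      by (rule ext) (simp add: matrix_vector_mult_diff_rdistrib matrix_vector_mul_assoc[symmetric])
    thus ?thesis unfolding opnorm_def by simp
  qed
  have fd: "fdist P Q = m"
    unfolding fdist_def
  proof (rule cInf_eq_minimum)
    have "opnorm (P ** Q ** P - Rm) = m"
      using opn[of Rm] up low[OF mat_proj_props(1,2)[OF oRm] allI[OF mat_proj_props(3)[OF oRm]]] by (simp add: Rm)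
    thus "m \<in> (\<lambda>R. opnorm (P ** Q ** P - R)) ` {R. orth_proj R}" using oRm by force
    fix y assume "y \<in> (\<lambda>R. opnorm (P ** Q ** P - R)) ` {R. orth_proj R}"
    then obtain R where "orth_proj R" "y = opnorm (P ** Q ** P - R)" by auto
    thus "m \<le> y" using opn[of R] low[OF mat_proj_props(1,2)[OF \<open>orth_proj R\<close>] allI[OF mat_proj_props(3)[OF \<open>orth_proj R\<close>]]] by simp
  qed
  have "opnorm (commutator P Q) = onorm (\<lambda>x. P *v (Q *v x) - Q *v (P *v x))"
  proof -
    have "(\<lambda>x. (P ** Q - Q ** P) *v x) = (\<lambda>x. P *v (Q *v x) - Q *v (P *v x))"
      by (rule ext) (simp add: matrix_vector_mult_diff_rdistrib matrix_vector_mul_assoc[symmetric])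
    thus ?thesis unfolding opnorm_def commutator_def by simp
  qed
  thus ?thesis using onC fd by simp
qed

end
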